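(* Let $M=\mathbb{R}_{\max}$ and $R=s(M)$ be its symmetrization hyperfield. Let $f\in M[x_1,\dots,x_n]$ be a polynomial written as a sum $f=\sum_{i=1}^k m_i$ of $k\ge1$ monomials $m_i=c_iX^{I_i}$ with $c_i\in\mathbb{R}$ and pairwise distinct multi-indices $I_i\in\mathbb{N}^n$. For each $i$ let \[\tilde f_{\hat i}:=\sum_{j\neq i}(c_j,1)X^{I_j}+(c_i,-1)X^{I_i}\in R[x_1,\dots,x_n],\] let $V(\tilde f_{\hat i}):=\{z\in R^n\mid 0_R\in\tilde f_{\hat i}(z)\}$ and $HV(f):=\bigcup_{i=1}^kV(\tilde f_{\hat i})$. Let $\varphi=s^n:M^n\to R^n$ be the coordinatewise map $a\mapsto(a,1)$ (with $-\infty\mapsto 0_R$). Then $\varphi(\operatorname{trop}(V(f)))=HV(f)\cap\operatorname{Im}(\varphi)$; in particular $\varphi$ restricts to a bijection $\operatorname{trop}(V(f))\to HV(f)\cap\operatorname{Im}(\varphi)$.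
   Context: $\mathbb{R}_{\max}=(\mathbb{R}\cup\{-\infty\},\max,+)$ is the tropical semifield: its "addition" is $\max$ (zero element $0_M=-\infty$) and its "multiplication" is ordinary addition (unit $0$). For a monomial $m=cX^I$ and $a\in M^n$, $m(a)=c+\sum_l I_l a_l$ (ordinary arithmetic, with $-\infty$ absorbing). $\operatorname{trop}(V(f))$ is the set of $a\in M^n$ such that the value $\max_i m_i(a)$ is either $-\infty$ or is attained by at least two distinct indices $i$. The symmetrization $R=s(M)$ has elements $(t,1)$, $(t,-1)$ for $t\in\mathbb{R}$ together with $0_R=(-\infty,1)=(-\infty,-1)$; write $|(t,p)|=t$. Its hyperaddition is: for $x,y\in R$, $x+y=\{x\}$ if $|x|>|y|$ or $x=y$; $x+y=\{y\}$ if $|x|<|y|$; and if $|x|=|y|$ with opposite signs, $x+y=\{(t,\pm1)\mid t\le|x|\}$ (including $0_R$). Multiplication is $(t,p)(u,q)=(t+u,pq)$ with $0_R$ absorbing. $R$ is a hyperfield. For a polynomial $g=\sum_I a_IX^I$ over $R$ (finite formal sum, no repeated multi-index) and $z\in R^n$, the evaluation $g(z)$ is the subset $\sum_I a_Iz^I\subseteq R$ computed with the hyperaddition (sums of sets as $A+B=\bigcup_{a\in A,b\in B}a+b$). *)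

theory Defs
  imports "HOL-Library.Extended_Real"
begin

text \<open>An element of M is None (= -infinity) or Some t with t real.
  A point of M^n is a list of length n.\<close>
type_synonym tropM = "real option"

text \<open>A monomial c X^I over M: a pair (c, I) with c real and I a multi-index
  (list of natural numbers of length n).\<close>
type_synonym monoM = "real \<times> nat list"

text \<open>m(a) = c + sum_l I_l a_l, with -infinity absorbing; a factor with exponent
  I_l = 0 is the tropical unit (X_l^0 = 1), so it contributes nothing.\<close>
definition mono_eval :: "monoM \<Rightarrow> tropM list \<Rightarrow> tropM" where
  "mono_eval m a =
     (if \<forall>l < length (snd m). 0 < snd m ! l \<longrightarrow> a ! l \<noteq> None
      then Some (fst m + (\<Sum>l<length (snd m). (if snd m ! l = 0 then 0
                   else real (snd m ! l) * the (a ! l))))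
      else None)"

definition tle :: "tropM \<Rightarrow> tropM \<Rightarrow> bool" where
  "tle x y = (case x of None \<Rightarrow> True | Some s \<Rightarrow> (case y of None \<Rightarrow> False | Some t \<Rightarrow> s \<le> t))"

text \<open>trop(V(f)) for f = sum of the monomials in the list ms (n variables):
  points a in M^n such that max_i m_i(a) is -infinity or attained at two distinct indices.\<close>
definition tropV :: "nat \<Rightarrow> monoM list \<Rightarrow> tropM list set" where
  "tropV n ms = {a. length a = n \<and>
      ((\<forall>i < length ms. mono_eval (ms ! i) a = None) \<or>
       (\<exists>i < length ms. \<exists>j < length ms. i \<noteq> j \<and>
          mono_eval (ms ! i) a = mono_eval (ms ! j) a \<and>
          (\<forall>l < length ms. tle (mono_eval (ms ! l) a) (mono_eval (ms ! i) a))))}"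

text \<open>None = 0_R; Some (t, True) = (t, 1); Some (t, False) = (t, -1).\<close>
type_synonym symR = "(real \<times> bool) option"

definition rzero :: symR where "rzero = None"
definition rone :: symR where "rone = Some (0, True)"

definition rabs :: "symR \<Rightarrow> ereal" where
  "rabs x = (case x of None \<Rightarrow> -\<infinity> | Some (t, _) \<Rightarrow> ereal t)"

text \<open>Hyperaddition. In the last case |x| = |y| and x \<noteq> y, i.e. opposite signs;
  the result is {(t, +-1) | t \<le> |x|} together with 0_R.\<close>
definition hadd :: "symR \<Rightarrow> symR \<Rightarrow> symR set" where
  "hadd x y = (if rabs x > rabs y \<or> x = y then {x}
               else if rabs x < rabs y then {y}
               else {z. rabs z \<le> rabs x})"

definition hset_add :: "symR set \<Rightarrow> symR set \<Rightarrow> symR set" where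
  "hset_add A B = (\<Union>a\<in>A. \<Union>b\<in>B. hadd a b)"

fun rmult :: "symR \<Rightarrow> symR \<Rightarrow> symR" where
  "rmult (Some (t, p)) (Some (u, q)) = Some (t + u, p = q)"
| "rmult _ _ = None"

fun rpow :: "symR \<Rightarrow> nat \<Rightarrow> symR" where
  "rpow x 0 = rone"
| "rpow x (Suc k) = rmult x (rpow x k)"

definition rmono_eval :: "symR \<times> nat list \<Rightarrow> symR list \<Rightarrow> symR" where
  "rmono_eval m z = foldr (\<lambda>l acc. rmult (rpow (z ! l) (snd m ! l)) acc)
                         [0..<length (snd m)] (fst m)"

text \<open>Evaluation g(z) of a polynomial over R (list of monomials) as a subset of R,
  computed with the hyperaddition (0_R is neutral: 0_R + x = {x}).\<close>
definition reval :: "(symR \<times> nat list) list \<Rightarrow> symR list \<Rightarrow> symR set" where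
  "reval g z = foldr (\<lambda>m S. hset_add {rmono_eval m z} S) g {rzero}"

definition RV :: "nat \<Rightarrow> (symR \<times> nat list) list \<Rightarrow> symR list set" where
  "RV n g = {z. length z = n \<and> rzero \<in> reval g z}"

definition ftilde :: "monoM list \<Rightarrow> nat \<Rightarrow> (symR \<times> nat list) list" where
  "ftilde ms i = map (\<lambda>j. (Some (fst (ms ! j), j \<noteq> i), snd (ms ! j))) [0..<length ms]"

definition HV :: "nat \<Rightarrow> monoM list \<Rightarrow> symR list set" where
  "HV n ms = (\<Union>i<length ms. RV n (ftilde ms i))"

definition sM :: "tropM \<Rightarrow> symR" where
  "sM a = (case a of None \<Rightarrow> rzero | Some t \<Rightarrow> Some (t, True))"

definition phi :: "tropM list \<Rightarrow> symR list" where
  "phi a = map sM a"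

end

theory Submission
  imports Defs
begin

lemma rpow_sM: "rpow (sM x) k = (if k = 0 then rone else case x of None \<Rightarrow> None | Some t \<Rightarrow> Some (real k * t, True))"
  by (induction k) (auto simp: sM_def rone_def rzero_def algebra_simps split: option.splits)

lemma rmult_rone: "rmult rone x = x"
  by (cases x) (auto simp: rone_def)

lemma fold_mono:
  assumes "\<forall>l\<in>set L. l < length a" "distinct L"
  shows "foldr (\<lambda>l acc. rmult (rpow (phi a ! l) (I ! l)) acc) L (Some (c, s)) =
    (if \<forall>l\<in>set L. 0 < I!l \<longrightarrow> a!l \<noteq> None
     then Some (c + (\<Sum>l\<in>set L. if I!l = 0 then 0 else real (I!l) * the (a!l)), s) else None)"
  using assms
proof (induction L)
  case Nil
  then show ?case by simp
next
  case (Cons l L)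
  have pl: "phi a ! l = sM (a ! l)" using Cons.prems by (simp add: phi_def)
  have fin: "l \<notin> set L" using Cons.prems by simp
  show ?case
  proof (cases "I ! l = 0")
    case True
    then show ?thesis using Cons pl fin by (auto simp: rpow_sM rmult_rone)
  next
    case False
    then show ?thesis using Cons pl fin
      by (cases "a ! l") (auto simp: rpow_sM algebra_simps)
  qed
qed

definition conv :: "bool \<Rightarrow> real option \<Rightarrow> symR" where
  "conv s e = (case e of None \<Rightarrow> None | Some t \<Rightarrow> Some (t, s))"

lemma rmono_phi:
  assumes "length I = length a"
  shows "rmono_eval (Some (c, s), I) (phi a) = conv s (mono_eval (c, I) a)"
proof -
  have "set [0..<length I] = {..<length I}" by auto
  then show ?thesis
    using fold_mono[of "[0..<length I]" a I c s] assms
    unfolding rmono_eval_def mono_eval_def conv_def snd_conv fst_conv by (auto simp del: upt_Suc)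
qed

fun rneg :: "symR \<Rightarrow> symR" where
  "rneg None = None" | "rneg (Some (t, p)) = Some (t, \<not> p)"

lemma rabs_rneg[simp]: "rabs (rneg u) = rabs u"
  by (cases u rule: rneg.cases) (auto simp: rabs_def)

lemma rabs_Some: "rabs (Some (t, p)) = ereal t" by (simp add: rabs_def)

lemma rabs_None_iff: "rabs x = -\<infinity> \<longleftrightarrow> x = None"
  by (auto simp: rabs_def split: option.splits)

lemma rabs_eq_ne: "rabs x = rabs y \<Longrightarrow> x \<noteq> y \<Longrightarrow> y = rneg x \<and> x \<noteq> None"
  by (cases x; cases y) (auto simp: rabs_def)

lemma hadd_rneg: "hadd u (rneg u) = {z. rabs z \<le> rabs u} \<or> u = None"
  by (cases u rule: rneg.cases) (simp_all add: hadd_def rabs_Some)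

lemma ball_union:
  assumes "rabs u \<le> r"
  shows "hset_add {u} {z. rabs z \<le> r} = {z. rabs z \<le> r}"
proof
  show "hset_add {u} {z. rabs z \<le> r} \<subseteq> {z. rabs z \<le> r}"
    using assms by (auto simp: hset_add_def hadd_def split: if_splits)
next
  show "{z. rabs z \<le> r} \<subseteq> hset_add {u} {z. rabs z \<le> r}"
  proof
    fix z assume z: "z \<in> {z. rabs z \<le> r}"
    show "z \<in> hset_add {u} {z. rabs z \<le> r}"
    proof (cases "rabs z > rabs u")
      case True
      then have "hadd u z = {z}" by (auto simp: hadd_def)
      then show ?thesis using z by (auto simp: hset_add_def)
    next
      case False
      have m: "rneg u \<in> {z. rabs z \<le> r}" using assms by simp
      have "z \<in> hadd u (rneg u)"
      proof (cases "u = None")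
        case True
        then show ?thesis using False by (auto simp: hadd_def rabs_def split: option.splits)
      next
        case nn: False
        then show ?thesis using hadd_rneg[of u] False by auto
      qed
      then show ?thesis using m unfolding hset_add_def by blast
    qed
  qed
qed

lemma fold_char:
  "(\<exists>v. foldr (\<lambda>v S. hset_add {v} S) vs {None} = {v} \<and> (v = None \<or> v \<in> set vs) \<and>
        (\<forall>w\<in>set vs. rabs w < rabs v \<or> w = v)) \<or>
   (\<exists>x y. x \<in> set vs \<and> y \<in> set vs \<and> x \<noteq> y \<and> rabs x = rabs y \<and> (\<forall>w\<in>set vs. rabs w \<le> rabs x)
        \<and> foldr (\<lambda>v S. hset_add {v} S) vs {None} = {z. rabs z \<le> rabs x})"
proof (induction vs)
  case Nil
  then show ?case by auto
next
  case (Cons u vs)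
  let ?S = "foldr (\<lambda>v S. hset_add {v} S) vs {None}"
  have eq: "foldr (\<lambda>v S. hset_add {v} S) (u # vs) {None} = hset_add {u} ?S" by simp
  from Cons.IH show ?case
  proof
    assume "\<exists>v. ?S = {v} \<and> (v = None \<or> v \<in> set vs) \<and> (\<forall>w\<in>set vs. rabs w < rabs v \<or> w = v)"
    then obtain v where v: "?S = {v}" "v = None \<or> v \<in> set vs" "\<forall>w\<in>set vs. rabs w < rabs v \<or> w = v" by blast
    have hs: "hset_add {u} ?S = hadd u v" using v(1) by (simp add: hset_add_def)
    consider "rabs u > rabs v" | "u = v" | "rabs u < rabs v" | "rabs u = rabs v" "u \<noteq> v"
      by fastforce
    then show ?thesis
    proof cases
      case 1
      then have "hadd u v = {u}" by (simp add: hadd_def)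
      then show ?thesis using 1 v eq hs by (intro disjI1 exI[of _ u]) force
    next
      case 2
      then have "hadd u v = {u}" by (simp add: hadd_def)
      then show ?thesis using 2 v eq hs by (intro disjI1 exI[of _ u]) force
    next
      case 3
      then have "hadd u v = {v}" by (auto simp: hadd_def)
      then show ?thesis using 3 v eq hs by (intro disjI1 exI[of _ v]) force
    next
      case 4
      then have h: "hadd u v = {z. rabs z \<le> rabs u}" by (simp add: hadd_def)
      have "v \<noteq> None" using 4 rabs_None_iff by metis
      then have "v \<in> set vs" using v(2) by blast
      show ?thesis
      proof (rule disjI2, rule exI[of _ u], rule exI[of _ v], intro conjI)
        show "\<forall>w\<in>set (u # vs). rabs w \<le> rabs u"
          using v(3) 4 by (auto intro: order.strict_implies_order)
        show "foldr (\<lambda>v S. hset_add {v} S) (u # vs) {None} = {z. rabs z \<le> rabs u}"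
          using h eq hs by simp
      qed (use 4 \<open>v \<in> set vs\<close> in simp_all)
    qed
  next
    assume "\<exists>x y. x \<in> set vs \<and> y \<in> set vs \<and> x \<noteq> y \<and> rabs x = rabs y \<and> (\<forall>w\<in>set vs. rabs w \<le> rabs x)
        \<and> ?S = {z. rabs z \<le> rabs x}"
    then obtain x y where xy: "x \<in> set vs" "y \<in> set vs" "x \<noteq> y" "rabs x = rabs y"
      "\<forall>w\<in>set vs. rabs w \<le> rabs x" "?S = {z. rabs z \<le> rabs x}" by blast
    show ?thesis
    proof (cases "rabs u \<le> rabs x")
      case True
      then have "hset_add {u} ?S = ?S" using xy(6) ball_union by simp
      then show ?thesis using xy True eq by (intro disjI2 exI[of _ x] exI[of _ y]) auto
    next
      case False
      have "hset_add {u} ?S = {u}"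
      proof -
        have "\<And>b. rabs b \<le> rabs x \<Longrightarrow> hadd u b = {u}" using False by (auto simp: hadd_def)
        moreover have "None \<in> ?S" using xy(6) by (auto simp: rabs_def)
        ultimately show ?thesis using xy(6) by (auto simp: hset_add_def)
      qed
      moreover have "\<forall>w\<in>set (u # vs). rabs w < rabs u \<or> w = u"
        
      proof
        fix w assume "w \<in> set (u # vs)"
        then consider "w = u" | "w \<in> set vs" by auto
        then show "rabs w < rabs u \<or> w = u"
        proof cases
          case 2
          then have "rabs w \<le> rabs x" using xy(5) by blast
          then show ?thesis using False by (meson le_less_trans not_le)
        qed simp
      qed
      ultimately show ?thesis using eq
        by (intro disjI1 exI[of _ u]) simp
    qed
  qed
qed

lemma zero_in_fold:
  "None \<in> foldr (\<lambda>v S. hset_add {v} S) vs {None} \<longleftrightarrow>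
   (\<forall>w\<in>set vs. w = None) \<or>
   (\<exists>x\<in>set vs. \<exists>y\<in>set vs. x \<noteq> y \<and> rabs x = rabs y \<and> (\<forall>w\<in>set vs. rabs w \<le> rabs x))"
proof -
  have ninf: "\<And>w. \<not> rabs w < -\<infinity>" by simp
  from fold_char[of vs] show ?thesis
  proof
    assume "\<exists>v. foldr (\<lambda>v S. hset_add {v} S) vs {None} = {v} \<and> (v = None \<or> v \<in> set vs) \<and>
        (\<forall>w\<in>set vs. rabs w < rabs v \<or> w = v)"
    then obtain v where v: "foldr (\<lambda>v S. hset_add {v} S) vs {None} = {v}" "v = None \<or> v \<in> set vs"
        "\<forall>w\<in>set vs. rabs w < rabs v \<or> w = v" by blast
    show ?thesis
    proof (cases "v = None")
      case True
      then show ?thesis using v by (auto simp: rabs_def)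
    next
      case False
      have "\<not> (\<exists>x\<in>set vs. \<exists>y\<in>set vs. x \<noteq> y \<and> rabs x = rabs y \<and> (\<forall>w\<in>set vs. rabs w \<le> rabs x))"
      proof
        assume "\<exists>x\<in>set vs. \<exists>y\<in>set vs. x \<noteq> y \<and> rabs x = rabs y \<and> (\<forall>w\<in>set vs. rabs w \<le> rabs x)"
        then obtain x y where "x\<in>set vs" "y\<in>set vs" "x \<noteq> y" "rabs x = rabs y" "\<forall>w\<in>set vs. rabs w \<le> rabs x"
          by blast
        moreover have "v \<in> set vs" using v(2) False by simp
        ultimately show False using v(3) by (metis not_le)
      qed
      moreover have "\<not> (\<forall>w\<in>set vs. w = None)" using v(2) False by auto
      moreover have "None \<notin> foldr (\<lambda>v S. hset_add {v} S) vs {None}" using v(1) False by auto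
      ultimately show ?thesis by blast
    qed
  next
    assume "\<exists>x y. x \<in> set vs \<and> y \<in> set vs \<and> x \<noteq> y \<and> rabs x = rabs y \<and> (\<forall>w\<in>set vs. rabs w \<le> rabs x)
        \<and> foldr (\<lambda>v S. hset_add {v} S) vs {None} = {z. rabs z \<le> rabs x}"
    then show ?thesis by (auto simp: rabs_def)
  qed
qed

definition ea :: "real option \<Rightarrow> ereal" where
  "ea e = (case e of None \<Rightarrow> -\<infinity> | Some t \<Rightarrow> ereal t)"

lemma rabs_conv: "rabs (conv s e) = ea e"
  by (cases e) (auto simp: rabs_def conv_def ea_def)

lemma tle_ea: "tle x y \<longleftrightarrow> ea x \<le> ea y"
  by (cases x; cases y) (auto simp: tle_def ea_def)

lemma conv_None: "conv s e = None \<longleftrightarrow> e = None"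
  by (cases e) (auto simp: conv_def)

lemma conv_eq: "conv s e = conv s' e' \<longleftrightarrow> e = e' \<and> (e = None \<or> s = s')"
  by (cases e; cases e') (auto simp: conv_def)

lemma ea_eq: "ea e = ea e' \<longleftrightarrow> e = e'"
  by (cases e; cases e') (auto simp: ea_def)

lemma reval_phi:
  assumes "\<forall>j < length ms. length (snd (ms ! j)) = length a"
  shows "reval (ftilde ms i) (phi a) =
    foldr (\<lambda>v S. hset_add {v} S) (map (\<lambda>j. conv (j \<noteq> i) (mono_eval (ms ! j) a)) [0..<length ms]) {None}"
proof -
  have "map (\<lambda>m. rmono_eval m (phi a)) (ftilde ms i) =
        map (\<lambda>j. conv (j \<noteq> i) (mono_eval (ms ! j) a)) [0..<length ms]"
    unfolding ftilde_def using assms by (auto simp: rmono_phi)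
  moreover have "\<And>xs S. foldr (\<lambda>m. hset_add {rmono_eval m (phi a)}) xs S =
     foldr (\<lambda>v. hset_add {v}) (map (\<lambda>m. rmono_eval m (phi a)) xs) S"
    by (simp add: foldr_map comp_def)
  ultimately show ?thesis unfolding reval_def rzero_def by simp
qed

lemma key:
  assumes "\<forall>j < length ms. length (snd (ms ! j)) = length a" "i < length ms"
  shows "rzero \<in> reval (ftilde ms i) (phi a) \<longleftrightarrow>
    (\<forall>j<length ms. mono_eval (ms ! j) a = None) \<or>
    (\<exists>j<length ms. j \<noteq> i \<and> mono_eval (ms ! j) a = mono_eval (ms ! i) a \<and>
        mono_eval (ms ! i) a \<noteq> None \<and> (\<forall>l<length ms. tle (mono_eval (ms ! l) a) (mono_eval (ms ! i) a)))"
    (is "_ \<longleftrightarrow> ?A \<or> ?B")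
proof -
  define e where "e j = mono_eval (ms ! j) a" for j
  define vs where "vs = map (\<lambda>j. conv (j \<noteq> i) (e j)) [0..<length ms]"
  have sv: "set vs = (\<lambda>j. conv (j \<noteq> i) (e j)) ` {..<length ms}" unfolding vs_def by auto
  have r: "rzero \<in> reval (ftilde ms i) (phi a) \<longleftrightarrow>
     (\<forall>w\<in>set vs. w = None) \<or>
     (\<exists>x\<in>set vs. \<exists>y\<in>set vs. x \<noteq> y \<and> rabs x = rabs y \<and> (\<forall>w\<in>set vs. rabs w \<le> rabs x))"
    using reval_phi[OF assms(1), of i] zero_in_fold[of vs] unfolding vs_def e_def rzero_def by simp
  have A: "(\<forall>w\<in>set vs. w = None) \<longleftrightarrow> ?A" unfolding sv e_def by (auto simp: conv_None)
  have B: "(\<exists>x\<in>set vs. \<exists>y\<in>set vs. x \<noteq> y \<and> rabs x = rabs y \<and> (\<forall>w\<in>set vs. rabs w \<le> rabs x)) \<longleftrightarrow> ?B"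
  proof
    assume "\<exists>x\<in>set vs. \<exists>y\<in>set vs. x \<noteq> y \<and> rabs x = rabs y \<and> (\<forall>w\<in>set vs. rabs w \<le> rabs x)"
    then obtain j1 j2 where j: "j1 < length ms" "j2 < length ms"
      "conv (j1 \<noteq> i) (e j1) \<noteq> conv (j2 \<noteq> i) (e j2)" "ea (e j1) = ea (e j2)"
      "\<forall>l<length ms. ea (e l) \<le> ea (e j1)"
      unfolding sv by (auto simp: rabs_conv)
    have ee: "e j1 = e j2" using j(4) ea_eq by blast
    then have ne: "e j1 \<noteq> None" "(j1 \<noteq> i) \<noteq> (j2 \<noteq> i)" using j(3) conv_eq by metis+
    show ?B
    proof (cases "j1 = i")
      case True
      then show ?thesis using ne ee j by (auto simp: e_def tle_ea)
    next
      case False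
      then have "j2 = i" using ne by blast
      then show ?thesis using ne ee j False by (auto simp: e_def tle_ea)
    qed
  next
    assume ?B
    then obtain j where j: "j < length ms" "j \<noteq> i" "e j = e i" "e i \<noteq> None"
      "\<forall>l<length ms. ea (e l) \<le> ea (e i)" by (auto simp: e_def tle_ea)
    show "\<exists>x\<in>set vs. \<exists>y\<in>set vs. x \<noteq> y \<and> rabs x = rabs y \<and> (\<forall>w\<in>set vs. rabs w \<le> rabs x)"
    proof (rule bexI[of _ "conv False (e i)"], rule bexI[of _ "conv True (e j)"])
      show "conv True (e j) \<in> set vs" unfolding sv
        by (rule image_eqI[where x=j]) (use j in auto)
      show "conv False (e i) \<in> set vs" using assms(2) unfolding sv by force
      show "conv False (e i) \<noteq> conv True (e j) \<and> rabs (conv False (e i)) = rabs (conv True (e j)) \<and>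
        (\<forall>w\<in>set vs. rabs w \<le> rabs (conv False (e i)))"
        using j unfolding sv by (auto simp: conv_eq rabs_conv)
    qed
  qed
  show ?thesis using r A B by blast
qed

lemma inj_phi: "inj phi"
proof -
  have "inj sM" by (rule injI) (auto simp: sM_def rzero_def split: option.splits)
  then show ?thesis unfolding phi_def by (simp add: inj_mapI)
qed

lemma tropV_iff:
  assumes "length ms \<ge> 1" "\<forall>i < length ms. length (snd (ms ! i)) = n" "length a = n"
  shows "a \<in> tropV n ms \<longleftrightarrow> phi a \<in> HV n ms"
proof -
  define e where "e j = mono_eval (ms ! j) a" for j
  have lp: "length (phi a) = n" using assms(3) by (simp add: phi_def)
  have hv: "phi a \<in> HV n ms \<longleftrightarrow> (\<exists>i<length ms. rzero \<in> reval (ftilde ms i) (phi a))"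
    unfolding HV_def RV_def using lp by auto
  have none: "tle x None \<longleftrightarrow> x = None" for x by (cases x) (auto simp: tle_def)
  show ?thesis
  proof
    assume "a \<in> tropV n ms"
    then have t: "(\<forall>i<length ms. e i = None) \<or>
       (\<exists>i<length ms. \<exists>j<length ms. i \<noteq> j \<and> e i = e j \<and> (\<forall>l<length ms. tle (e l) (e i)))"
      unfolding tropV_def e_def by auto
    then show "phi a \<in> HV n ms"
    proof
      assume "\<forall>i<length ms. e i = None"
      then have "rzero \<in> reval (ftilde ms 0) (phi a)" using key[of ms a 0] assms by (auto simp: e_def Suc_le_eq)
        then show ?thesis unfolding hv using assms(1) by (intro exI[of _ 0]) auto
    next
      assume "\<exists>i<length ms. \<exists>j<length ms. i \<noteq> j \<and> e i = e j \<and> (\<forall>l<length ms. tle (e l) (e i))"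
      then obtain i j where ij: "i<length ms" "j<length ms" "i \<noteq> j" "e i = e j" "\<forall>l<length ms. tle (e l) (e i)"
        by blast
      show ?thesis
      proof (cases "e i = None")
        case True
        then have "\<forall>l<length ms. e l = None" using ij(5) none by metis
        then have "rzero \<in> reval (ftilde ms 0) (phi a)" using key[of ms a 0] assms by (auto simp: e_def Suc_le_eq)
        then show ?thesis unfolding hv using assms(1) by (intro exI[of _ 0]) auto
      next
        case False
        have "rzero \<in> reval (ftilde ms i) (phi a)"
          using key[of ms a i] assms ij False unfolding e_def by (metis)
        then show ?thesis unfolding hv using ij by blast
      qed
    qed
  next
    assume "phi a \<in> HV n ms"
    then obtain i where i: "i < length ms" "rzero \<in> reval (ftilde ms i) (phi a)" unfolding hv by blast
    then have "(\<forall>j<length ms. e j = None) \<or>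
      (\<exists>j<length ms. j \<noteq> i \<and> e j = e i \<and> e i \<noteq> None \<and> (\<forall>l<length ms. tle (e l) (e i)))"
      using key[of ms a i] assms unfolding e_def by auto
    then show "a \<in> tropV n ms"
    proof
      assume "\<forall>j<length ms. e j = None"
      then show ?thesis unfolding tropV_def e_def using assms(3) by auto
    next
      assume "\<exists>j<length ms. j \<noteq> i \<and> e j = e i \<and> e i \<noteq> None \<and> (\<forall>l<length ms. tle (e l) (e i))"
      then obtain j where "j<length ms" "j \<noteq> i" "e j = e i" "\<forall>l<length ms. tle (e l) (e i)" by blast
      then show ?thesis unfolding tropV_def e_def using assms(3) i(1)
        by (smt (verit) mem_Collect_eq)
    qed
  qed
qed

theorem proposition4p14:
  fixes n :: nat and ms :: "(real \<times> nat list) list"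
  assumes "length ms \<ge> 1"
    and "\<forall>i < length ms. length (snd (ms ! i)) = n"
    and "distinct (map snd ms)"
  shows "phi ` tropV n ms = HV n ms \<inter> phi ` {a :: real option list. length a = n}
         \<and> bij_betw phi (tropV n ms) (HV n ms \<inter> phi ` {a :: real option list. length a = n})"
proof -
  have eq: "phi ` tropV n ms = HV n ms \<inter> phi ` {a :: real option list. length a = n}"
  proof
    show "phi ` tropV n ms \<subseteq> HV n ms \<inter> phi ` {a. length a = n}"
    proof
      fix z assume "z \<in> phi ` tropV n ms"
      then obtain a where a: "a \<in> tropV n ms" "z = phi a" by blast
      have "length a = n" using a(1) by (simp add: tropV_def)
      then show "z \<in> HV n ms \<inter> phi ` {a. length a = n}"
        using tropV_iff[OF assms(1,2)] a by auto
    qed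
  next
    show "HV n ms \<inter> phi ` {a. length a = n} \<subseteq> phi ` tropV n ms"
      using tropV_iff[OF assms(1,2)] by auto
  qed
  moreover have "bij_betw phi (tropV n ms) (HV n ms \<inter> phi ` {a :: real option list. length a = n})"
    unfolding bij_betw_def using eq inj_phi by (auto intro: inj_on_subset)
  ultimately show ?thesis by blast
qed

end
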